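(* Let $A\in\mathbb{R}^{n\times n}$ and $B\in\mathbb{R}^{m\times m}$, and define $C:=\operatorname{diag}(A,B)\in\mathbb{R}^{(n+m)\times(n+m)}$. Pick $k\in\{1,\dots,n+m\}$, let $r:=\binom{n+m}{k}$, $i_1:=\max\{0,k-n\}$ and $i_2:=\min\{m,k\}$. Then there exists a permutation matrix $P\in\mathbb{R}^{r\times r}$ such that \[ C^{(k)}=P\left(\operatorname{diag}_{i\in\{i_1,\dots,i_2\}}\big(A^{(k-i)}\otimes B^{(i)}\big)\right)P^{-1} \] and \[ C^{[k]}=P\left(\operatorname{diag}_{i\in\{i_1,\dots,i_2\}}\big(A^{[k-i]}\oplus B^{[i]}\big)\right)P^{-1}. \]
   Context: For $M\in\mathbb{R}^{p\times q}$ and $k\le\min\{p,q\}$, the $k$th multiplicative compound $M^{(k)}$ is the $\binom{p}{k}\times\binom{q}{k}$ matrix of all $k\times k$ minors of $M$, rows and columns indexed by increasing $k$-tuples of indices in lexicographic order. For square $M$, the $k$th additive compound is $M^{[k]}:=\frac{d}{dt}(\exp(Mt))^{(k)}\big|_{t=0}$. For square $M$, $M^{(0)}:=1$ and $M^{[0]}:=0$ (as $1\times1$ matrices). $\otimes$ is the Kronecker product, and the Kronecker sum of $X\in\mathbb{R}^{a\times a}$, $Y\in\mathbb{R}^{b\times b}$ is $X\oplus Y:=X\otimes I_b+I_a\otimes Y$. $\operatorname{diag}_{i\in\{i_1,\dots,i_2\}}(M_i)$ denotes the block-diagonal matrix with diagonal blocks $M_{i_1},M_{i_1+1},\dots,M_{i_2}$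 in this order. *)

theory Defs
  imports "HOL-Analysis.Derivative" "Jordan_Normal_Form.Matrix" "Jordan_Normal_Form.Determinant"
begin

fun inc_tuples :: "nat \<Rightarrow> 'a list \<Rightarrow> 'a list list" where
  "inc_tuples 0 xs = [[]]"
| "inc_tuples (Suc k) [] = []"
| "inc_tuples (Suc k) (x # xs) = map ((#) x) (inc_tuples k xs) @ inc_tuples (Suc k) xs"

definition mult_compound :: "nat \<Rightarrow> real mat \<Rightarrow> real mat" where
  "mult_compound k M =
     (let I = inc_tuples k [0..<dim_row M]; J = inc_tuples k [0..<dim_col M]
      in mat (length I) (length J)
           (\<lambda>(i, j). det (mat k k (\<lambda>(a, b). M $$ (I ! i ! a, J ! j ! b)))))"

definition mat_exp :: "real \<Rightarrow> real mat \<Rightarrow> real mat" where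
  "mat_exp t M = mat (dim_row M) (dim_col M)
     (\<lambda>(i, j). \<Sum>l. (t ^ l / fact l) * (M ^\<^sub>m l) $$ (i, j))"

definition add_compound :: "nat \<Rightarrow> real mat \<Rightarrow> real mat" where
  "add_compound k M =
     (let r = dim_row (mult_compound k M)
      in mat r r (\<lambda>(i, j). deriv (\<lambda>t. mult_compound k (mat_exp t M) $$ (i, j)) 0))"

definition kron :: "real mat \<Rightarrow> real mat \<Rightarrow> real mat" where
  "kron X Y = mat (dim_row X * dim_row Y) (dim_col X * dim_col Y)
     (\<lambda>(i, j). X $$ (i div dim_row Y, j div dim_col Y) * Y $$ (i mod dim_row Y, j mod dim_col Y))"

definition kron_sum :: "real mat \<Rightarrow> real mat \<Rightarrow> real mat" where
  "kron_sum X Y = kron X (1\<^sub>m (dim_row Y)) + kron (1\<^sub>m (dim_row X)) Y"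

definition perm_mat :: "nat \<Rightarrow> real mat \<Rightarrow> bool" where
  "perm_mat r P \<longleftrightarrow> (\<exists>\<sigma>. \<sigma> permutes {..<r} \<and> P = mat r r (\<lambda>(i, j). if i = \<sigma> j then 1 else 0))"

end

theory Submission imports Defs begin

lemma length_inc_tuples: "length (inc_tuples k xs) = length xs choose k"
  by (induction k xs rule: inc_tuples.induct) auto

lemma set_inc_tuples:
  fixes xs :: "'a::linorder list"
  shows "sorted_wrt (<) xs \<Longrightarrow> set (inc_tuples k xs) =
     {ys. sorted_wrt (<) ys \<and> length ys = k \<and> set ys \<subseteq> set xs}"
proof (induction k xs rule: inc_tuples.induct)
  case (1 xs)
  then show ?case by auto
next
  case (2 k)
  then show ?case by auto
next
  case (3 k x xs)
  have sx: "sorted_wrt (<) xs" and lt: "\<forall>y\<in>set xs. x < y" using "3.prems" by auto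
  show ?case
  proof (intro Set.set_eqI iffI)
    fix ys assume "ys \<in> set (inc_tuples (Suc k) (x # xs))"
    then show "ys \<in> {ys. sorted_wrt (<) ys \<and> length ys = Suc k \<and> set ys \<subseteq> set (x # xs)}"
      using "3.IH"[OF sx] lt by fastforce
  next
    fix ys assume ys: "ys \<in> {ys. sorted_wrt (<) ys \<and> length ys = Suc k \<and> set ys \<subseteq> set (x # xs)}"
    then obtain y ys' where yy: "ys = y # ys'" by (cases ys) auto
    show "ys \<in> set (inc_tuples (Suc k) (x # xs))"
    proof (cases "y = x")
      case True
      have "set ys' \<subseteq> set xs" using ys yy True by auto
      then show ?thesis using "3.IH"(1)[OF sx] ys yy True by auto
    next
      case False
      have "y \<in> set xs" using ys yy False by auto
      then have "x < z" if "z \<in> set ys'" for z using ys yy lt that by (auto intro: less_trans)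
      then have "set ys \<subseteq> set xs" using ys yy \<open>y \<in> set xs\<close> by fastforce
      then show ?thesis using "3.IH"(2)[OF sx] ys yy by auto
    qed
  qed
qed

lemma distinct_inc_tuples:
  fixes xs :: "'a::linorder list"
  shows "sorted_wrt (<) xs \<Longrightarrow> distinct (inc_tuples k xs)"
proof (induction k xs rule: inc_tuples.induct)
  case (3 k x xs)
  have sx: "sorted_wrt (<) xs" and lt: "\<forall>y\<in>set xs. x < y" using "3.prems" by auto
  have "x # ys \<notin> set (inc_tuples (Suc k) xs)" for ys
    using set_inc_tuples[OF sx, of "Suc k"] lt by auto
  then show ?case using "3.IH"[OF sx] by (auto simp: distinct_map)
qed auto

lemma concat_nth_off:
  "b < length Ls \<Longrightarrow> x < length (Ls ! b) \<Longrightarrow>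
   concat Ls ! (sum_list (map length (take b Ls)) + x) = Ls ! b ! x"
proof (induction Ls arbitrary: b)
  case (Cons L Ls)
  then show ?case by (cases b) (auto simp: nth_append)
qed auto

lemma concat_decomp:
  "p < length (concat Ls) \<Longrightarrow>
   \<exists>b x. b < length Ls \<and> x < length (Ls ! b) \<and> p = sum_list (map length (take b Ls)) + x"
proof (induction Ls arbitrary: p)
  case (Cons L Ls)
  show ?case
  proof (cases "p < length L")
    case True
    then show ?thesis by (intro exI[of _ 0] exI[of _ p]) auto
  next
    case False
    then have "p - length L < length (concat Ls)" using Cons.prems by auto
    from Cons.IH[OF this] obtain b x where "b < length Ls" "x < length (Ls ! b)"
      "p - length L = sum_list (map length (take b Ls)) + x" by blast
    then show ?thesis using False by (intro exI[of _ "Suc b"] exI[of _ x]) auto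
  qed
qed auto

lemma distinct_concat_map:
  "distinct xs \<Longrightarrow> (\<And>x. x \<in> set xs \<Longrightarrow> distinct (F x)) \<Longrightarrow>
   (\<And>x y. x \<in> set xs \<Longrightarrow> y \<in> set xs \<Longrightarrow> x \<noteq> y \<Longrightarrow> set (F x) \<inter> set (F y) = {}) \<Longrightarrow>
   distinct (concat (map F xs))"
proof (induction xs)
  case (Cons a xs)
    have "set (F a) \<inter> set (concat (map F xs)) = {}"
    using Cons.prems(1,3) by fastforce
  then show ?case using Cons by simp
qed auto

lemma length_prod_list:
  "length (concat (map (\<lambda>a. map (g a) Bs) As)) = length As * length Bs"
  by (induction As) auto

lemma nth_prod_list:
  "x < length As * length Bs \<Longrightarrow>
   concat (map (\<lambda>a. map (g a) Bs) As) ! x = g (As ! (x div length Bs)) (Bs ! (x mod length Bs))"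
proof (induction As arbitrary: x)
  case (Cons a As)
  show ?case
  proof (cases "x < length Bs")
    case True
    then show ?thesis by (auto simp: nth_append)
  next
    case False
    then have "x - length Bs < length As * length Bs" using Cons.prems by auto
    note IH = Cons.IH[OF this]
    have L: "0 < length Bs" using Cons.prems by (cases "length Bs") auto
    from IH False L show ?thesis
      by (simp add: nth_append le_div_geq le_mod_geq)
  qed
qed auto

lemma sorted_split:
  fixes ys :: "nat list"
  shows "sorted_wrt (<) ys \<Longrightarrow> ys = filter (\<lambda>x. x < n) ys @ filter (\<lambda>x. \<not> x < n) ys"
proof (induction ys)
  case (Cons y ys)
  show ?case
  proof (cases "y < n")
    case True
    then show ?thesis using Cons by auto
  next
    case False
    then have "\<forall>z\<in>set ys. \<not> z < n" using Cons.prems by auto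
    then show ?thesis using False by (auto simp: filter_id_conv)
  qed
qed auto

lemma diag_block_entry:
  assumes "\<forall>M\<in>set Ms. dim_row M = dim_col M" "b < length Ms" "b' < length Ms"
    "x < dim_row (Ms ! b)" "y < dim_row (Ms ! b')"
  shows "diag_block_mat Ms $$ (sum_list (map dim_row (take b Ms)) + x,
           sum_list (map dim_row (take b' Ms)) + y) = (if b = b' then Ms ! b $$ (x, y) else 0)"
  using assms
proof (induction Ms arbitrary: b b')
  case (Cons M Ms)
  have sq: "sum_list (map dim_col Ms) = sum_list (map dim_row Ms)"
    using Cons.prems(1) by (induction Ms) auto
  have sqM: "dim_col M = dim_row M" using Cons.prems(1) by auto
  have lt: "sum_list (map dim_row (take c Ms)) + z < sum_list (map dim_row Ms)"
    if "c < length Ms" "z < dim_row (Ms ! c)" for c z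
    using that
  proof (induction Ms arbitrary: c)
    case (Cons a Ms)
    then show ?case by (cases c) auto
  qed auto
  show ?case
  proof (cases b)
    case 0
    show ?thesis
    proof (cases b')
      case 0
      then show ?thesis using \<open>b = 0\<close> Cons.prems sq sqM
        by (simp add: Let_def dim_diag_block_mat)
    next
      case (Suc c')
      have "sum_list (map dim_row (take c' Ms)) + y < sum_list (map dim_row Ms)"
        using lt Cons.prems Suc by auto
      then show ?thesis using \<open>b = 0\<close> Suc Cons.prems sq sqM
        by (simp add: Let_def dim_diag_block_mat)
    qed
  next
    case (Suc c)
    have l1: "sum_list (map dim_row (take c Ms)) + x < sum_list (map dim_row Ms)"
      using lt Cons.prems Suc by auto
    show ?thesis
    proof (cases b')
      case 0
      then show ?thesis using Suc Cons.prems sq sqM l1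
        by (simp add: Let_def dim_diag_block_mat)
    next
      case (Suc c')
      have l2: "sum_list (map dim_row (take c' Ms)) + y < sum_list (map dim_row Ms)"
        using lt Cons.prems Suc by auto
      have "diag_block_mat Ms $$ (sum_list (map dim_row (take c Ms)) + x,
           sum_list (map dim_row (take c' Ms)) + y) = (if c = c' then Ms ! c $$ (x, y) else 0)"
        using Cons.IH[of c c'] Cons.prems \<open>b = Suc c\<close> Suc by auto
      then show ?thesis using \<open>b = Suc c\<close> Suc Cons.prems sq sqM l1 l2
        by (simp add: Let_def dim_diag_block_mat add.assoc)
    qed
  qed
qed auto

lemma kron_carrier: "X \<in> carrier_mat a a \<Longrightarrow> Y \<in> carrier_mat b b \<Longrightarrow> kron X Y \<in> carrier_mat (a*b) (a*b)"
  unfolding kron_def by auto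

lemma kron_entry:
  assumes "X \<in> carrier_mat a a" "Y \<in> carrier_mat b b" "x < a * b" "y < a * b"
  shows "kron X Y $$ (x, y) = X $$ (x div b, y div b) * Y $$ (x mod b, y mod b)"
  using assms unfolding kron_def by auto

lemma kron_sum_carrier: "X \<in> carrier_mat a a \<Longrightarrow> Y \<in> carrier_mat b b \<Longrightarrow> kron_sum X Y \<in> carrier_mat (a*b) (a*b)"
  unfolding kron_sum_def using kron_carrier by auto

lemma kron_sum_entry:
  assumes "X \<in> carrier_mat a a" "Y \<in> carrier_mat b b" "x < a * b" "y < a * b"
  shows "kron_sum X Y $$ (x, y) = X $$ (x div b, y div b) * (if x mod b = y mod b then 1 else 0)
     + (if x div b = y div b then 1 else 0) * Y $$ (x mod b, y mod b)"
proof -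
  have b: "0 < b" using assms(3) by (cases b) auto
  have a: "0 < a" using assms(3) by (cases a) auto
  have "x div b < a" "y div b < a" using assms(3,4) by (auto simp: less_mult_imp_div_less)
  moreover have "x mod b < b" "y mod b < b" using b by auto
  ultimately show ?thesis
    using assms kron_carrier[of X a Y b] kron_carrier[of "1\<^sub>m a" a Y b]
      kron_carrier[of X a "1\<^sub>m b" b]
    unfolding kron_sum_def by (simp add: kron_entry[of _ a _ b])
qed

lemma det_pigeon:
  fixes M :: "'a::comm_ring_1 mat"
  assumes M: "M \<in> carrier_mat k k" and R: "R \<subseteq> {..<k}" and Cs: "finite Cs" "card Cs < card R"
    and z: "\<And>u v. u \<in> R \<Longrightarrow> v < k \<Longrightarrow> v \<notin> Cs \<Longrightarrow> M $$ (u, v) = 0"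
  shows "det M = 0"
proof -
  have "(\<Prod>i = 0..<k. M $$ (i, p i)) = 0" if p: "p permutes {0..<k}" for p
  proof -
    have "\<not> p ` R \<subseteq> Cs"
    proof
      assume "p ` R \<subseteq> Cs"
      then have "card (p ` R) \<le> card Cs" using Cs by (simp add: card_mono)
      moreover have "card (p ` R) = card R"
        using permutes_inj[OF p] by (simp add: card_image inj_on_subset)
      ultimately show False using Cs by simp
    qed
    then obtain u where u: "u \<in> R" "p u \<notin> Cs" by blast
    have "p u < k" using permutes_in_image[OF p] u R by auto
    then have "M $$ (u, p u) = 0" using z u by auto
    then show ?thesis using u R by (intro prod_zero) (auto intro!: bexI[of _ u])
  qed
  then show ?thesis unfolding det_def'[OF M] by simp
qed

lemma mc_carrier: "mult_compound j M \<in> carrier_mat (dim_row M choose j) (dim_col M choose j)"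
  unfolding mult_compound_def Let_def by (auto simp: length_inc_tuples)

lemma mc_entry:
  assumes "x < dim_row M choose j" "y < dim_col M choose j"
  shows "mult_compound j M $$ (x, y) = det (mat j j (\<lambda>(u, v).
     M $$ (inc_tuples j [0..<dim_row M] ! x ! u, inc_tuples j [0..<dim_col M] ! y ! v)))"
  using assms unfolding mult_compound_def Let_def by (auto simp: length_inc_tuples)

context
  fixes A' B' :: "real mat" and n m :: nat
  assumes A': "A' \<in> carrier_mat n n" and B': "B' \<in> carrier_mat m m"
begin

lemma C_entry:
  assumes "p < n + m" "q < n + m"
  shows "four_block_mat A' (0\<^sub>m n m) (0\<^sub>m m n) B' $$ (p, q) =
    (if p < n then if q < n then A' $$ (p, q) else 0
     else if q < n then 0 else B' $$ (p - n, q - n))"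
  using assms A' B' by auto

lemma split_same:
  assumes a: "set a \<subseteq> {..<n}" "set a' \<subseteq> {..<n}" "length a = s" "length a' = s"
    and b: "set bb \<subseteq> {..<m}" "set bb' \<subseteq> {..<m}" "length bb = t" "length bb' = t"
  shows "det (mat (s + t) (s + t) (\<lambda>(u, v). four_block_mat A' (0\<^sub>m n m) (0\<^sub>m m n) B' $$
            ((a @ map ((+) n) bb) ! u, (a' @ map ((+) n) bb') ! v)))
       = det (mat s s (\<lambda>(u, v). A' $$ (a ! u, a' ! v))) * det (mat t t (\<lambda>(u, v). B' $$ (bb ! u, bb' ! v)))"
proof -
  have eq: "mat (s + t) (s + t) (\<lambda>(u, v). four_block_mat A' (0\<^sub>m n m) (0\<^sub>m m n) B' $$
            ((a @ map ((+) n) bb) ! u, (a' @ map ((+) n) bb') ! v))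
    = four_block_mat (mat s s (\<lambda>(u, v). A' $$ (a ! u, a' ! v))) (0\<^sub>m s t) (0\<^sub>m t s)
        (mat t t (\<lambda>(u, v). B' $$ (bb ! u, bb' ! v)))"
  proof (rule eq_matI)
    fix u v assume uv: "u < dim_row (four_block_mat (mat s s (\<lambda>(u, v). A' $$ (a ! u, a' ! v))) (0\<^sub>m s t) (0\<^sub>m t s)
        (mat t t (\<lambda>(u, v). B' $$ (bb ! u, bb' ! v))))"
      "v < dim_col (four_block_mat (mat s s (\<lambda>(u, v). A' $$ (a ! u, a' ! v))) (0\<^sub>m s t) (0\<^sub>m t s)
        (mat t t (\<lambda>(u, v). B' $$ (bb ! u, bb' ! v))))"
    then have uv': "u < s + t" "v < s + t" by auto
    have r1: "u < s \<Longrightarrow> a ! u < n" using a uv' by (auto simp: subset_iff)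
    have r2: "v < s \<Longrightarrow> a' ! v < n" using a uv' by (auto simp: subset_iff)
    have r3: "bb ! (u - s) < m" if "\<not> u < s"
    proof -
      have "u - s < length bb" using that uv' b by linarith
      then have "bb ! (u - s) \<in> set bb" by simp
      then show ?thesis using b by auto
    qed
    have r4: "bb' ! (v - s) < m" if "\<not> v < s"
    proof -
      have "v - s < length bb'" using that uv' b by linarith
      then have "bb' ! (v - s) \<in> set bb'" by simp
      then show ?thesis using b by auto
    qed
    show "mat (s + t) (s + t) (\<lambda>(u, v). four_block_mat A' (0\<^sub>m n m) (0\<^sub>m m n) B' $$
            ((a @ map ((+) n) bb) ! u, (a' @ map ((+) n) bb') ! v)) $$ (u, v) =
       four_block_mat (mat s s (\<lambda>(u, v). A' $$ (a ! u, a' ! v))) (0\<^sub>m s t) (0\<^sub>m t s)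
        (mat t t (\<lambda>(u, v). B' $$ (bb ! u, bb' ! v))) $$ (u, v)"
      using uv' r1 r2 r3 r4 a b A' B' by (auto simp: nth_append)
  qed auto
  show ?thesis unfolding eq
    by (rule det_four_block_mat_lower_left_zero) auto
qed

lemma split_diff:
  assumes a: "set a \<subseteq> {..<n}" "set a' \<subseteq> {..<n}"
    and b: "set bb \<subseteq> {..<m}" "set bb' \<subseteq> {..<m}"
    and len: "length a + length bb = k" "length a' + length bb' = k" "length a \<noteq> length a'"
  shows "det (mat k k (\<lambda>(u, v). four_block_mat A' (0\<^sub>m n m) (0\<^sub>m m n) B' $$
            ((a @ map ((+) n) bb) ! u, (a' @ map ((+) n) bb') ! v))) = 0"
proof -
  let ?M = "mat k k (\<lambda>(u, v). four_block_mat A' (0\<^sub>m n m) (0\<^sub>m m n) B' $$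
            ((a @ map ((+) n) bb) ! u, (a' @ map ((+) n) bb') ! v))"
  have r1: "u < length a \<Longrightarrow> a ! u < n" for u using a by (auto simp: subset_iff)
  have r2: "v < length a' \<Longrightarrow> a' ! v < n" for v using a by (auto simp: subset_iff)
  have r3: "bb ! (u - length a) < m" if "\<not> u < length a" "u < k" for u
  proof -
    have "u - length a < length bb" using that len by linarith
    then have "bb ! (u - length a) \<in> set bb" by simp
    then show ?thesis using b by auto
  qed
  have r4: "bb' ! (v - length a') < m" if "\<not> v < length a'" "v < k" for v
  proof -
    have "v - length a' < length bb'" using that len by linarith
    then have "bb' ! (v - length a') \<in> set bb'" by simp
    then show ?thesis using b by auto
  qed
  show ?thesis
  proof (cases "length a' < length a")
    case True
    show ?thesis
    proof (rule det_pigeon[of _ k "{..<length a}" "{..<length a'}"])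
      fix u v assume "u \<in> {..<length a}" "v < k" "v \<notin> {..<length a'}"
      moreover have "a ! u < n" "bb' ! (v - length a') < m" using r1 r4 \<open>u \<in> _\<close> \<open>v < k\<close> \<open>v \<notin> _\<close> by auto
      ultimately show "?M $$ (u, v) = 0" using len A' B' by (auto simp: nth_append)
    qed (use True len in auto)
  next
    case False
    then have F: "length a < length a'" using len by auto
    show ?thesis
    proof (rule det_pigeon[of _ k "{length a..<k}" "{length a'..<k}"])
      fix u v assume "u \<in> {length a..<k}" "v < k" "v \<notin> {length a'..<k}"
      moreover have "a' ! v < n" "bb ! (u - length a) < m" using r2 r3 \<open>u \<in> _\<close> \<open>v < k\<close> \<open>v \<notin> _\<close> F by auto
      ultimately show "?M $$ (u, v) = 0" using len A' B' by (auto simp: nth_append)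
    qed (use F len in auto)
  qed
qed

end

definition TT :: "nat \<Rightarrow> nat \<Rightarrow> nat list list" where
  "TT j N = inc_tuples j [0..<N]"

lemma TT_set: "set (TT j N) = {ys. sorted_wrt (<) ys \<and> length ys = j \<and> set ys \<subseteq> {..<N}}"
  unfolding TT_def by (subst set_inc_tuples) auto

lemma TT_distinct: "distinct (TT j N)"
  unfolding TT_def by (rule distinct_inc_tuples) simp

lemma TT_length: "length (TT j N) = N choose j"
  unfolding TT_def by (simp add: length_inc_tuples)

lemma TT_nth:
  assumes "x < N choose j"
  shows "sorted_wrt (<) (TT j N ! x)" "length (TT j N ! x) = j" "set (TT j N ! x) \<subseteq> {..<N}"
proof -
  have "TT j N ! x \<in> set (TT j N)" using assms TT_length by simp
  then show "sorted_wrt (<) (TT j N ! x)" "length (TT j N ! x) = j" "set (TT j N ! x) \<subseteq> {..<N}"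
    unfolding TT_set by auto
qed

definition blockL :: "nat \<Rightarrow> nat \<Rightarrow> nat \<Rightarrow> nat \<Rightarrow> nat list list" where
  "blockL n m k i = concat (map (\<lambda>a. map (\<lambda>b. a @ map ((+) n) b) (TT i m)) (TT (k - i) n))"

definition idxs :: "nat \<Rightarrow> nat \<Rightarrow> nat \<Rightarrow> nat list" where
  "idxs n m k = map nat [max 0 (int k - int n)..min (int m) (int k)]"

definition LD :: "nat \<Rightarrow> nat \<Rightarrow> nat \<Rightarrow> nat list list" where
  "LD n m k = concat (map (blockL n m k) (idxs n m k))"

definition hh :: "nat \<Rightarrow> nat \<Rightarrow> nat \<Rightarrow> nat \<Rightarrow> nat" where
  "hh n m k i = (n choose (k - i)) * (m choose i)"

lemma idxs_set: "i \<in> set (idxs n m k) \<longleftrightarrow> k \<le> n + i \<and> i \<le> m \<and> i \<le> k"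
proof
  assume "i \<in> set (idxs n m k)"
  then obtain j where "j \<in> {max 0 (int k - int n)..min (int m) (int k)}" "i = nat j"
    unfolding idxs_def by auto
  then show "k \<le> n + i \<and> i \<le> m \<and> i \<le> k" by auto
next
  assume "k \<le> n + i \<and> i \<le> m \<and> i \<le> k"
  then have "int i \<in> {max 0 (int k - int n)..min (int m) (int k)}" by auto
  then show "i \<in> set (idxs n m k)" unfolding idxs_def by (auto intro!: image_eqI[of _ nat "int i"])
qed

lemma idxs_distinct: "distinct (idxs n m k)"
  unfolding idxs_def by (auto simp: distinct_map intro!: inj_onI)

lemma blockL_length: "length (blockL n m k i) = hh n m k i"
  unfolding blockL_def hh_def by (simp add: length_prod_list TT_length)

lemma blockL_nth:
  assumes "x < hh n m k i"
  shows "blockL n m k i ! x = TT (k - i) n ! (x div (m choose i)) @ map ((+) n) (TT i m ! (x mod (m choose i)))"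
  using assms unfolding blockL_def hh_def by (simp add: nth_prod_list TT_length)

lemma blockL_set: "set (blockL n m k i) = {a @ map ((+) n) b | a b. a \<in> set (TT (k - i) n) \<and> b \<in> set (TT i m)}"
  unfolding blockL_def by auto

lemma blockL_filter:
  assumes "ys \<in> set (blockL n m k i)"
  shows "length (filter (\<lambda>x. x < n) ys) = k - i"
proof -
  obtain a b where ab: "ys = a @ map ((+) n) b" "a \<in> set (TT (k - i) n)" "b \<in> set (TT i m)"
    using assms blockL_set by blast
  have "filter (\<lambda>x. x < n) a = a" using ab(2) unfolding TT_set by (auto simp: filter_id_conv)
  moreover have "filter (\<lambda>x. x < n) (map ((+) n) b) = []" by (auto simp: filter_empty_conv)
  ultimately show ?thesis using ab TT_set by auto
qed

lemma blockL_distinct: "distinct (blockL n m k i)"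
  unfolding blockL_def
proof (rule distinct_concat_map)
  show "distinct (TT (k - i) n)" by (rule TT_distinct)
  fix a assume "a \<in> set (TT (k - i) n)"
  show "distinct (map (\<lambda>b. a @ map ((+) n) b) (TT i m))"
    using TT_distinct by (auto simp: distinct_map inj_on_def)
next
  fix a a' assume "a \<in> set (TT (k - i) n)" "a' \<in> set (TT (k - i) n)" "a \<noteq> a'"
  then have "length a = length a'" unfolding TT_set by auto
  then show "set (map (\<lambda>b. a @ map ((+) n) b) (TT i m)) \<inter> set (map (\<lambda>b. a' @ map ((+) n) b) (TT i m)) = {}"
    using \<open>a \<noteq> a'\<close> by auto
qed

lemma LD_distinct: "distinct (LD n m k)"
  unfolding LD_def
proof (rule distinct_concat_map)
  show "distinct (idxs n m k)" by (rule idxs_distinct)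
  show "distinct (blockL n m k i)" for i by (rule blockL_distinct)
  fix i i' assume "i \<in> set (idxs n m k)" "i' \<in> set (idxs n m k)" "i \<noteq> i'"
  then have "k - i \<noteq> k - i'" using idxs_set by auto
  then show "set (blockL n m k i) \<inter> set (blockL n m k i') = {}"
    using blockL_filter[of _ n m k i] blockL_filter[of _ n m k i'] by force
qed

lemma LD_set:
  assumes "k \<le> n + m"
  shows "set (LD n m k) = set (TT k (n + m))"
proof (intro Set.set_eqI iffI)
  fix ys assume "ys \<in> set (LD n m k)"
  then obtain i where i: "i \<in> set (idxs n m k)" "ys \<in> set (blockL n m k i)" unfolding LD_def by auto
  then obtain a b where ab: "ys = a @ map ((+) n) b" "a \<in> set (TT (k - i) n)" "b \<in> set (TT i m)"
    using blockL_set by blast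
  have "sorted_wrt (<) ys" using ab unfolding TT_set
    by (auto simp: sorted_wrt_append sorted_wrt_map subset_iff intro: less_le_trans)
  moreover have "length ys = k" using ab i idxs_set[of i n m k] unfolding TT_set by auto
  moreover have "set ys \<subseteq> {..<n + m}" using ab unfolding TT_set by auto
  ultimately show "ys \<in> set (TT k (n + m))" unfolding TT_set by auto
next
  fix ys assume "ys \<in> set (TT k (n + m))"
  then have ys: "sorted_wrt (<) ys" "length ys = k" "set ys \<subseteq> {..<n + m}" unfolding TT_set by auto
  define a where "a = filter (\<lambda>x. x < n) ys"
  define c where "c = filter (\<lambda>x. \<not> x < n) ys"
  define b where "b = map (\<lambda>x. x - n) c"
  have split: "ys = a @ c" unfolding a_def c_def by (rule sorted_split[OF ys(1)])
  have cb: "c = map ((+) n) b" unfolding b_def map_map by (rule sym, rule map_idI) (auto simp: c_def)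
  have sa: "sorted_wrt (<) a" unfolding a_def using ys(1) by (simp add: sorted_wrt_filter)
  have sc: "sorted_wrt (<) c" unfolding c_def using ys(1) by (simp add: sorted_wrt_filter)
  have sb: "sorted_wrt (<) b" using sc unfolding cb by (simp add: sorted_wrt_map)
  have seta: "set a \<subseteq> {..<n}" unfolding a_def by auto
  have setb: "set b \<subseteq> {..<m}" unfolding b_def c_def using ys(3) by auto
  have la: "length a \<le> n"
  proof -
    have "length a = card (set a)" using sa by (simp add: distinct_card strict_sorted_iff)
    also have "\<dots> \<le> card {..<n}" using seta by (intro card_mono) auto
    finally show ?thesis by simp
  qed
  have lb: "length b \<le> m"
  proof -
    have "length b = card (set b)" using sb by (simp add: distinct_card strict_sorted_iff)
    also have "\<dots> \<le> card {..<m}" using setb by (intro card_mono) auto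
    finally show ?thesis by simp
  qed
  have lab: "length a + length b = k" using ys(2) split cb by (metis length_append length_map)
  let ?i = "length b"
  have i: "?i \<in> set (idxs n m k)" using la lb lab idxs_set by auto
  have "a \<in> set (TT (k - ?i) n)" using sa seta lab unfolding TT_set by auto
  moreover have "b \<in> set (TT ?i m)" using sb setb unfolding TT_set by auto
  ultimately have "ys \<in> set (blockL n m k ?i)" unfolding blockL_set using split cb by blast
  then show "ys \<in> set (LD n m k)" unfolding LD_def using i by auto
qed

lemma LD_length:
  assumes "k \<le> n + m"
  shows "length (LD n m k) = (n + m) choose k"
proof -
  have "length (LD n m k) = card (set (LD n m k))" using LD_distinct by (simp add: distinct_card)
  also have "\<dots> = card (set (TT k (n + m)))" using LD_set[OF assms] by simp
  also have "\<dots> = (n + m) choose k" using TT_distinct TT_length by (simp add: distinct_card)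
  finally show ?thesis .
qed


definition Pm :: "nat \<Rightarrow> (nat \<Rightarrow> nat) \<Rightarrow> real mat" where
  "Pm r \<sigma> = mat r r (\<lambda>(i, j). if i = \<sigma> j then 1 else 0)"

definition Pi :: "nat \<Rightarrow> (nat \<Rightarrow> nat) \<Rightarrow> real mat" where
  "Pi r \<sigma> = mat r r (\<lambda>(i, j). if j = \<sigma> i then 1 else 0)"

context
  fixes r :: nat and \<sigma> :: "nat \<Rightarrow> nat"
  assumes \<sigma>: "\<sigma> permutes {..<r}"
begin

lemma inv_lt: "i < r \<Longrightarrow> inv_into UNIV \<sigma> i < r"
  using permutes_in_image[OF permutes_inv[OF \<sigma>]] by auto

lemma sig_lt: "i < r \<Longrightarrow> \<sigma> i < r"
  using permutes_in_image[OF \<sigma>] by auto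

lemma sum_sel: "i < r \<Longrightarrow> (\<Sum>l\<in>{0..<r}. (if i = \<sigma> l then 1 else 0) * (f l :: real)) = f (inv_into UNIV \<sigma> i)"
proof -
  assume i: "i < r"
  have "(\<Sum>l\<in>{0..<r}. (if i = \<sigma> l then 1 else 0) * f l) = (\<Sum>l\<in>{0..<r}. if l = inv_into UNIV \<sigma> i then f l else 0)"
  proof (intro sum.cong refl)
    fix l
    have "i = \<sigma> l \<longleftrightarrow> l = inv_into UNIV \<sigma> i" using permutes_inv_eq[OF \<sigma>, of i l] by auto
    then show "(if i = \<sigma> l then 1 else 0) * f l = (if l = inv_into UNIV \<sigma> i then f l else 0)" by auto
  qed
  also have "\<dots> = f (inv_into UNIV \<sigma> i)" using inv_lt[OF i] by (simp add: sum.delta')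
  finally show ?thesis .
qed

lemma Pm_carrier: "Pm r \<sigma> \<in> carrier_mat r r" unfolding Pm_def by auto
lemma Pi_carrier: "Pi r \<sigma> \<in> carrier_mat r r" unfolding Pi_def by auto

lemma perm_mat_Pm: "perm_mat r (Pm r \<sigma>)"
  unfolding perm_mat_def Pm_def using \<sigma> by auto

lemma Pm_Pi: "Pm r \<sigma> * Pi r \<sigma> = 1\<^sub>m r"
proof (rule eq_matI)
  fix i j assume ij: "i < dim_row (1\<^sub>m r)" "j < dim_col (1\<^sub>m r)"
  then have "(Pm r \<sigma> * Pi r \<sigma>) $$ (i, j) = (\<Sum>l\<in>{0..<r}. (if i = \<sigma> l then 1 else 0) * (if j = \<sigma> l then 1 else 0))"
    unfolding Pm_def Pi_def by (auto simp: scalar_prod_def)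
  also have "\<dots> = (if j = \<sigma> (inv_into UNIV \<sigma> i) then 1 else 0)" using ij by (subst sum_sel) auto
  also have "\<dots> = 1\<^sub>m r $$ (i, j)" using ij permutes_inverses(1)[OF \<sigma>] by auto
  finally show "(Pm r \<sigma> * Pi r \<sigma>) $$ (i, j) = 1\<^sub>m r $$ (i, j)" .
qed (auto simp: Pm_def Pi_def)

lemma Pi_Pm: "Pi r \<sigma> * Pm r \<sigma> = 1\<^sub>m r"
proof (rule eq_matI)
  fix i j assume ij: "i < dim_row (1\<^sub>m r)" "j < dim_col (1\<^sub>m r)"
  then have "(Pi r \<sigma> * Pm r \<sigma>) $$ (i, j) = (\<Sum>l\<in>{0..<r}. (if l = \<sigma> i then 1 else 0) * (if l = \<sigma> j then 1 else 0))"
    unfolding Pm_def Pi_def by (auto simp: scalar_prod_def intro!: sum.cong)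
  also have "\<dots> = (\<Sum>l\<in>{0..<r}. (if l = \<sigma> i then (if l = \<sigma> j then 1 else 0) else 0))"
    by (intro sum.cong) auto
  also have "\<dots> = (if \<sigma> j = \<sigma> i then 1 else 0)" using ij sig_lt by (simp add: sum.delta)
  also have "\<dots> = (if \<sigma> i = \<sigma> j then 1 else 0)" by auto
  also have "\<dots> = 1\<^sub>m r $$ (i, j)" using ij permutes_inj[OF \<sigma>] by (auto dest: injD)
  finally show "(Pi r \<sigma> * Pm r \<sigma>) $$ (i, j) = 1\<^sub>m r $$ (i, j)" .
qed (auto simp: Pm_def Pi_def)

lemma conj_entry:
  assumes D: "D \<in> carrier_mat r r" and ij: "i < r" "j < r"
  shows "(Pm r \<sigma> * D * Pi r \<sigma>) $$ (i, j) = D $$ (inv_into UNIV \<sigma> i, inv_into UNIV \<sigma> j)"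
proof -
  have PD: "(Pm r \<sigma> * D) $$ (i, l) = D $$ (inv_into UNIV \<sigma> i, l)" if "l < r" for l
  proof -
    have "(Pm r \<sigma> * D) $$ (i, l) = (\<Sum>l'\<in>{0..<r}. (if i = \<sigma> l' then 1 else 0) * D $$ (l', l))"
      using D ij that unfolding Pm_def by (auto simp: scalar_prod_def intro!: sum.cong)
    also have "\<dots> = D $$ (inv_into UNIV \<sigma> i, l)" by (rule sum_sel[OF ij(1)])
    finally show ?thesis .
  qed
  have "(Pm r \<sigma> * D * Pi r \<sigma>) $$ (i, j) = (\<Sum>l\<in>{0..<r}. (Pm r \<sigma> * D) $$ (i, l) * (if j = \<sigma> l then 1 else 0))"
    using D ij unfolding Pi_def by (auto simp: scalar_prod_def Pm_def intro!: sum.cong)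
  also have "\<dots> = (\<Sum>l\<in>{0..<r}. (if j = \<sigma> l then 1 else 0) * D $$ (inv_into UNIV \<sigma> i, l))"
    by (intro sum.cong refl) (auto simp: PD)
  also have "\<dots> = D $$ (inv_into UNIV \<sigma> i, inv_into UNIV \<sigma> j)" by (rule sum_sel[OF ij(2)])
  finally show ?thesis .
qed

lemma conj_eq:
  assumes D: "D \<in> carrier_mat r r" and M: "M \<in> carrier_mat r r"
    and e: "\<And>p q. p < r \<Longrightarrow> q < r \<Longrightarrow> M $$ (\<sigma> p, \<sigma> q) = D $$ (p, q)"
  shows "M = Pm r \<sigma> * D * Pi r \<sigma>"
proof (rule eq_matI)
  fix i j assume "i < dim_row (Pm r \<sigma> * D * Pi r \<sigma>)" "j < dim_col (Pm r \<sigma> * D * Pi r \<sigma>)"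
  then have ij: "i < r" "j < r" unfolding Pm_def Pi_def by auto
  have "M $$ (i, j) = M $$ (\<sigma> (inv_into UNIV \<sigma> i), \<sigma> (inv_into UNIV \<sigma> j))" using permutes_inverses(1)[OF \<sigma>] by simp
  also have "\<dots> = D $$ (inv_into UNIV \<sigma> i, inv_into UNIV \<sigma> j)" using e inv_lt ij by auto
  finally show "M $$ (i, j) = (Pm r \<sigma> * D * Pi r \<sigma>) $$ (i, j)" using conj_entry[OF D ij] by simp
qed (use M in \<open>auto simp: Pm_def Pi_def\<close>)

end


definition sig :: "nat \<Rightarrow> nat \<Rightarrow> nat \<Rightarrow> nat \<Rightarrow> nat" where
  "sig n m k p = (if p < (n + m) choose k
     then the_inv_into {..<(n + m) choose k} ((!) (TT k (n + m))) (LD n m k ! p) else p)"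

definition off :: "nat \<Rightarrow> nat \<Rightarrow> nat \<Rightarrow> nat \<Rightarrow> nat" where
  "off n m k b = sum_list (map length (take b (map (blockL n m k) (idxs n m k))))"

context
  fixes n m k :: nat
  assumes kle: "k \<le> n + m"
begin

lemma sig_nth: "p < (n + m) choose k \<Longrightarrow> sig n m k p < (n + m) choose k \<and> TT k (n + m) ! sig n m k p = LD n m k ! p"
proof -
  assume p: "p < (n + m) choose k"
  have inj: "inj_on ((!) (TT k (n + m))) {..<(n + m) choose k}"
    using TT_distinct TT_length by (metis inj_on_nth lessThan_iff)
  have im: "(!) (TT k (n + m)) ` {..<(n + m) choose k} = set (TT k (n + m))"
    using TT_length by (auto simp: set_conv_nth)
  have "LD n m k ! p \<in> set (TT k (n + m))"
    using LD_set[OF kle] LD_length[OF kle] p by (metis nth_mem)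
  then show ?thesis using p inj im unfolding sig_def
    by (auto intro: f_the_inv_into_f the_inv_into_into[of _ _ _ "{..<(n + m) choose k}", simplified])
qed

lemma sig_permutes: "sig n m k permutes {..<(n + m) choose k}"
proof (rule bij_imp_permutes)
  let ?r = "(n + m) choose k"
  have inj: "inj_on (sig n m k) {..<?r}"
  proof (rule inj_onI)
    fix p q assume pq: "p \<in> {..<?r}" "q \<in> {..<?r}" "sig n m k p = sig n m k q"
    then have "LD n m k ! p = LD n m k ! q" using sig_nth by (metis lessThan_iff)
    then show "p = q" using LD_distinct LD_length[OF kle] pq by (simp add: nth_eq_iff_index_eq)
  qed
  have sub: "sig n m k ` {..<?r} \<subseteq> {..<?r}" using sig_nth by auto
  have "sig n m k ` {..<?r} = {..<?r}"
    using inj sub by (simp add: endo_inj_surj)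
  then show "bij_betw (sig n m k) {..<?r} {..<?r}" using inj unfolding bij_betw_def by simp
  show "x \<notin> {..<?r} \<Longrightarrow> sig n m k x = x" for x unfolding sig_def by auto
qed

lemma hh_pos: "x < hh n m k i \<Longrightarrow> x div (m choose i) < n choose (k - i) \<and> x mod (m choose i) < m choose i"
  unfolding hh_def
  by (metis less_mult_imp_div_less mod_less_divisor mult_eq_0_iff not_gr_zero not_less_zero)

lemma decomp:
  assumes "p < (n + m) choose k"
  shows "\<exists>b x. b < length (idxs n m k) \<and> x < hh n m k (idxs n m k ! b) \<and> p = off n m k b + x"
proof -
  have "p < length (concat (map (blockL n m k) (idxs n m k)))"
    using assms LD_length[OF kle] unfolding LD_def by simp
  from concat_decomp[OF this] show ?thesis unfolding off_def by (auto simp: blockL_length)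
qed

lemma LD_off: "b < length (idxs n m k) \<Longrightarrow> x < hh n m k (idxs n m k ! b) \<Longrightarrow>
   LD n m k ! (off n m k b + x) = blockL n m k (idxs n m k ! b) ! x"
  unfolding LD_def off_def by (subst concat_nth_off) (auto simp: blockL_length)

lemma diag_struct:
  assumes F: "\<And>i. i \<in> set (idxs n m k) \<Longrightarrow> F i \<in> carrier_mat (hh n m k i) (hh n m k i)"
    and b: "b < length (idxs n m k)" "b' < length (idxs n m k)"
    and x: "x < hh n m k (idxs n m k ! b)" "y < hh n m k (idxs n m k ! b')"
  shows "diag_block_mat (map F (idxs n m k)) $$ (off n m k b + x, off n m k b' + y)
     = (if b = b' then F (idxs n m k ! b) $$ (x, y) else 0)"
proof -
  have o: "off n m k c = sum_list (map dim_row (take c (map F (idxs n m k))))" for c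
  proof -
    have "map length (take c (map (blockL n m k) (idxs n m k))) = map dim_row (take c (map F (idxs n m k)))"
    proof -
      have dr: "dim_row (F i) = hh n m k i" if "i \<in> set (idxs n m k)" for i using F[OF that] by auto
      show ?thesis by (auto simp: take_map blockL_length dr dest!: in_set_takeD)
    qed
    then show ?thesis unfolding off_def by simp
  qed
  have dr: "dim_row (F i) = hh n m k i" "dim_col (F i) = hh n m k i" if "i \<in> set (idxs n m k)" for i
    using F[OF that] by auto
  have "diag_block_mat (map F (idxs n m k)) $$ (sum_list (map dim_row (take b (map F (idxs n m k)))) + x,
      sum_list (map dim_row (take b' (map F (idxs n m k)))) + y)
    = (if b = b' then map F (idxs n m k) ! b $$ (x, y) else 0)"
    by (rule diag_block_entry) (use b x in \<open>auto simp: dr\<close>)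
  then show ?thesis unfolding o using b by simp
qed

end


lemma concat_off_lt:
  "b < length Ls \<Longrightarrow> x < length (Ls ! b) \<Longrightarrow>
   sum_list (map length (take b Ls)) + x < length (concat Ls)"
proof (induction Ls arbitrary: b)
  case (Cons L Ls)
  then show ?case by (cases b) auto
qed auto

context
  fixes n m k :: nat and A' B' :: "real mat"
  assumes kle: "k \<le> n + m" and A': "A' \<in> carrier_mat n n" and B': "B' \<in> carrier_mat m m"
begin

lemma off_lt: "b < length (idxs n m k) \<Longrightarrow> x < hh n m k (idxs n m k ! b) \<Longrightarrow>
   off n m k b + x < (n + m) choose k"
  unfolding off_def using LD_length[OF kle] unfolding LD_def
  by (metis blockL_length concat_off_lt length_map nth_map)

lemma mult_block_entry:
  assumes b: "b < length (idxs n m k)" "b' < length (idxs n m k)"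
    and x: "x < hh n m k (idxs n m k ! b)" "y < hh n m k (idxs n m k ! b')"
  shows "mult_compound k (four_block_mat A' (0\<^sub>m n m) (0\<^sub>m m n) B') $$
      (sig n m k (off n m k b + x), sig n m k (off n m k b' + y))
    = (if b = b' then kron (mult_compound (k - idxs n m k ! b) A') (mult_compound (idxs n m k ! b) B') $$ (x, y) else 0)"
proof -
  let ?C = "four_block_mat A' (0\<^sub>m n m) (0\<^sub>m m n) B'"
  let ?i = "idxs n m k ! b" and ?i' = "idxs n m k ! b'"
  let ?p = "off n m k b + x" and ?q = "off n m k b' + y"
  have C: "?C \<in> carrier_mat (n + m) (n + m)" using A' B' by auto
  have pq: "?p < (n + m) choose k" "?q < (n + m) choose k" using off_lt b x by auto
  have ii: "?i \<in> set (idxs n m k)" "?i' \<in> set (idxs n m k)" using b by auto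
  then have ik: "?i \<le> k" "?i' \<le> k" using idxs_set by auto
  define ax where "ax = TT (k - ?i) n ! (x div (m choose ?i))"
  define bx where "bx = TT ?i m ! (x mod (m choose ?i))"
  define ay where "ay = TT (k - ?i') n ! (y div (m choose ?i'))"
  define by' where "by' = TT ?i' m ! (y mod (m choose ?i'))"
  have hx: "x div (m choose ?i) < n choose (k - ?i)" "x mod (m choose ?i) < m choose ?i"
    using hh_pos[OF kle x(1)] by auto
  have hy: "y div (m choose ?i') < n choose (k - ?i')" "y mod (m choose ?i') < m choose ?i'"
    using hh_pos[OF kle x(2)] by auto
  have fax: "set ax \<subseteq> {..<n}" "length ax = k - ?i" using TT_nth[OF hx(1)] ax_def by auto
  have fbx: "set bx \<subseteq> {..<m}" "length bx = ?i" using TT_nth[OF hx(2)] bx_def by auto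
  have fay: "set ay \<subseteq> {..<n}" "length ay = k - ?i'" using TT_nth[OF hy(1)] ay_def by auto
  have fby: "set by' \<subseteq> {..<m}" "length by' = ?i'" using TT_nth[OF hy(2)] by'_def by auto
  have Lp: "TT k (n + m) ! sig n m k ?p = ax @ map ((+) n) bx"
    using sig_nth[OF kle pq(1)] LD_off[OF kle b(1) x(1)] blockL_nth[OF x(1)] ax_def bx_def by simp
  have Lq: "TT k (n + m) ! sig n m k ?q = ay @ map ((+) n) by'"
    using sig_nth[OF kle pq(2)] LD_off[OF kle b(2) x(2)] blockL_nth[OF x(2)] ay_def by'_def by simp
  have sp: "sig n m k ?p < (n + m) choose k" "sig n m k ?q < (n + m) choose k"
    using sig_nth[OF kle] pq by auto
  have "mult_compound k ?C $$ (sig n m k ?p, sig n m k ?q) =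
     det (mat k k (\<lambda>(u, v). ?C $$ ((ax @ map ((+) n) bx) ! u, (ay @ map ((+) n) by') ! v)))"
  proof -
    have dC: "dim_row ?C = n + m" "dim_col ?C = n + m" using C by auto
    have e: "mult_compound k ?C $$ (sig n m k ?p, sig n m k ?q) = det (mat k k (\<lambda>(u, v). ?C $$
       (inc_tuples k [0..<dim_row ?C] ! sig n m k ?p ! u, inc_tuples k [0..<dim_col ?C] ! sig n m k ?q ! v)))"
      by (rule mc_entry) (use sp dC in auto)
    have dA: "dim_row A' = n" "dim_col A' = n" "dim_row B' = m" "dim_col B' = m" using A' B' by auto
    show ?thesis using e unfolding Lp[symmetric] Lq[symmetric] TT_def by (simp add: dA)
  qed
  also have "\<dots> = (if b = b' then kron (mult_compound (k - ?i) A') (mult_compound ?i B') $$ (x, y) else 0)"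
  proof (cases "b = b'")
    case True
    have kk: "k = (k - ?i) + ?i" using ik by simp
    have "det (mat k k (\<lambda>(u, v). ?C $$ ((ax @ map ((+) n) bx) ! u, (ay @ map ((+) n) by') ! v)))
      = det (mat (k - ?i) (k - ?i) (\<lambda>(u, v). A' $$ (ax ! u, ay ! v))) * det (mat ?i ?i (\<lambda>(u, v). B' $$ (bx ! u, by' ! v)))"
    proof -
      have H: "det (mat ((k - ?i) + ?i) ((k - ?i) + ?i) (\<lambda>(u, v). ?C $$ ((ax @ map ((+) n) bx) ! u, (ay @ map ((+) n) by') ! v)))
      = det (mat (k - ?i) (k - ?i) (\<lambda>(u, v). A' $$ (ax ! u, ay ! v))) * det (mat ?i ?i (\<lambda>(u, v). B' $$ (bx ! u, by' ! v)))"
        by (rule split_same[OF A' B']) (use fax fbx fay fby True in auto)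
      show ?thesis using H kk by simp
    qed
    also have "\<dots> = mult_compound (k - ?i) A' $$ (x div (m choose ?i), y div (m choose ?i)) *
        mult_compound ?i B' $$ (x mod (m choose ?i), y mod (m choose ?i))"
      using A' B' hx hy True by (simp add: mc_entry ax_def ay_def bx_def by'_def TT_def)
    also have "\<dots> = kron (mult_compound (k - ?i) A') (mult_compound ?i B') $$ (x, y)"
      using mc_carrier[of "k - ?i" A'] mc_carrier[of ?i B'] A' B' x True
      by (subst kron_entry[of _ "n choose (k - ?i)" _ "m choose ?i"]) (auto simp: hh_def)
    finally show ?thesis using True by simp
  next
    case False
    have "?i \<noteq> ?i'" using False b idxs_distinct by (simp add: nth_eq_iff_index_eq)
    then have "length ax \<noteq> length ay" using fax fay ik by auto
    then have "det (mat k k (\<lambda>(u, v). ?C $$ ((ax @ map ((+) n) bx) ! u, (ay @ map ((+) n) by') ! v))) = 0"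
      using split_diff[OF A' B' fax(1) fay(1) fbx(1) fby(1)] fax fbx fay fby ik by auto
    then show ?thesis using False by simp
  qed
  finally show ?thesis .
qed

end


lemma mat_exp_carrier: "mat_exp t M \<in> carrier_mat (dim_row M) (dim_col M)"
  unfolding mat_exp_def by auto

lemma mat_exp_entry: "a < dim_row M \<Longrightarrow> b < dim_col M \<Longrightarrow>
  mat_exp t M $$ (a, b) = (\<Sum>l. (t ^ l / fact l) * (M ^\<^sub>m l) $$ (a, b))"
  unfolding mat_exp_def by auto

lemma pow_four_block:
  assumes A': "A' \<in> carrier_mat n n" and B': "B' \<in> carrier_mat m m"
  shows "four_block_mat A' (0\<^sub>m n m) (0\<^sub>m m n) B' ^\<^sub>m l = four_block_mat (A' ^\<^sub>m l) (0\<^sub>m n m) (0\<^sub>m m n) (B' ^\<^sub>m l)"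
proof (induction l)
  case 0
  then show ?case using A' B' by simp
next
  case (Suc l)
  have "four_block_mat A' (0\<^sub>m n m) (0\<^sub>m m n) B' ^\<^sub>m Suc l =
      four_block_mat (A' ^\<^sub>m l) (0\<^sub>m n m) (0\<^sub>m m n) (B' ^\<^sub>m l) * four_block_mat A' (0\<^sub>m n m) (0\<^sub>m m n) B'"
    using Suc by simp
  also have "\<dots> = four_block_mat (A' ^\<^sub>m l * A' + 0\<^sub>m n m * 0\<^sub>m m n) (A' ^\<^sub>m l * 0\<^sub>m n m + 0\<^sub>m n m * B')
     (0\<^sub>m m n * A' + B' ^\<^sub>m l * 0\<^sub>m m n) (0\<^sub>m m n * 0\<^sub>m n m + B' ^\<^sub>m l * B')"
    by (rule mult_four_block_mat) (use A' B' in auto)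
  also have "\<dots> = four_block_mat (A' ^\<^sub>m Suc l) (0\<^sub>m n m) (0\<^sub>m m n) (B' ^\<^sub>m Suc l)"
  proof -
    have c: "A' ^\<^sub>m l * A' \<in> carrier_mat n n" "B' ^\<^sub>m l * B' \<in> carrier_mat m m" using A' B' by auto
    show ?thesis using A' B' c by (simp add: right_mult_zero_mat left_mult_zero_mat right_add_zero_mat left_add_zero_mat)
  qed
  finally show ?case .
qed

lemma mat_exp_four_block:
  assumes A': "A' \<in> carrier_mat n n" and B': "B' \<in> carrier_mat m m"
  shows "mat_exp t (four_block_mat A' (0\<^sub>m n m) (0\<^sub>m m n) B') =
     four_block_mat (mat_exp t A') (0\<^sub>m n m) (0\<^sub>m m n) (mat_exp t B')"
proof (rule eq_matI)
  let ?C = "four_block_mat A' (0\<^sub>m n m) (0\<^sub>m m n) B'"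
  fix i j assume ij: "i < dim_row (four_block_mat (mat_exp t A') (0\<^sub>m n m) (0\<^sub>m m n) (mat_exp t B'))"
    "j < dim_col (four_block_mat (mat_exp t A') (0\<^sub>m n m) (0\<^sub>m m n) (mat_exp t B'))"
  then have ij': "i < n + m" "j < n + m" using A' B' mat_exp_carrier[of t A'] mat_exp_carrier[of t B'] by auto
  have "mat_exp t ?C $$ (i, j) = (\<Sum>l. (t ^ l / fact l) * (?C ^\<^sub>m l) $$ (i, j))"
    using ij' A' B' by (subst mat_exp_entry) auto
  also have "\<dots> = (\<Sum>l. (t ^ l / fact l) * (four_block_mat (A' ^\<^sub>m l) (0\<^sub>m n m) (0\<^sub>m m n) (B' ^\<^sub>m l)) $$ (i, j))"
    by (simp add: pow_four_block[OF A' B'])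
  also have "\<dots> = four_block_mat (mat_exp t A') (0\<^sub>m n m) (0\<^sub>m m n) (mat_exp t B') $$ (i, j)"
  proof -
    have dA: "dim_row A' = n" "dim_col A' = n" "dim_row B' = m" "dim_col B' = m" using A' B' by auto
    have fb: "four_block_mat (A' ^\<^sub>m l) (0\<^sub>m n m) (0\<^sub>m m n) (B' ^\<^sub>m l) $$ (i, j) =
      (if i < n then if j < n then (A' ^\<^sub>m l) $$ (i, j) else 0
       else if j < n then 0 else (B' ^\<^sub>m l) $$ (i - n, j - n))" for l
      using ij' A' B' by (subst index_mat_four_block) (auto simp: pow_mat_dim_square[OF A'] pow_mat_dim_square[OF B'])
    have dE: "dim_row (mat_exp t A') = n" "dim_col (mat_exp t A') = n" "dim_row (mat_exp t B') = m" "dim_col (mat_exp t B') = m"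
      using mat_exp_carrier[of t A'] mat_exp_carrier[of t B'] dA by auto
    have fe: "four_block_mat (mat_exp t A') (0\<^sub>m n m) (0\<^sub>m m n) (mat_exp t B') $$ (i, j) =
      (if i < n then if j < n then mat_exp t A' $$ (i, j) else 0
       else if j < n then 0 else mat_exp t B' $$ (i - n, j - n))"
      using ij' by (subst index_mat_four_block) (auto simp: dE)
    show ?thesis unfolding fb fe using ij'
      by (cases "i < n"; cases "j < n"; simp add: mat_exp_entry dA)
  qed
  finally show "mat_exp t ?C $$ (i, j) = four_block_mat (mat_exp t A') (0\<^sub>m n m) (0\<^sub>m m n) (mat_exp t B') $$ (i, j)" .
qed (use A' B' mat_exp_carrier[of t A'] mat_exp_carrier[of t B'] mat_exp_carrier[of t "four_block_mat A' (0\<^sub>m n m) (0\<^sub>m m n) B'"] in auto)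

lemma mat_exp_zero:
  assumes M: "M \<in> carrier_mat n n"
  shows "mat_exp 0 M = 1\<^sub>m n"
proof (rule eq_matI)
  fix i j assume "i < dim_row (1\<^sub>m n)" "j < dim_col (1\<^sub>m n)"
  then have ij: "i < n" "j < n" by auto
  have "mat_exp 0 M $$ (i, j) = (\<Sum>l. ((M ^\<^sub>m l) $$ (i, j) / fact l) * 0 ^ l)"
    using ij M by (subst mat_exp_entry) (auto simp: mult.commute)
  also have "\<dots> = 1\<^sub>m n $$ (i, j)" using ij M by (subst powser_zero) auto
  finally show "mat_exp 0 M $$ (i, j) = 1\<^sub>m n $$ (i, j)" .
qed (use M mat_exp_carrier[of 0 M] in auto)

lemma pow_bound:
  fixes M :: "real mat"
  assumes M: "M \<in> carrier_mat n n" and ab: "a < n" "b < n"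
  shows "\<bar>(M ^\<^sub>m l) $$ (a, b)\<bar> \<le> (\<Sum>a'<n. \<Sum>b'<n. \<bar>M $$ (a', b')\<bar>) ^ l"
  using ab
proof (induction l arbitrary: a b)
  case 0
  then show ?case using M by auto
next
  case (Suc l)
  let ?K = "\<Sum>a'<n. \<Sum>b'<n. \<bar>M $$ (a', b')\<bar>"
  have "(M ^\<^sub>m Suc l) $$ (a, b) = (\<Sum>c\<in>{0..<n}. (M ^\<^sub>m l) $$ (a, c) * M $$ (c, b))"
    using M Suc.prems by (auto simp: scalar_prod_def)
  then have "\<bar>(M ^\<^sub>m Suc l) $$ (a, b)\<bar> \<le> (\<Sum>c\<in>{0..<n}. \<bar>(M ^\<^sub>m l) $$ (a, c)\<bar> * \<bar>M $$ (c, b)\<bar>)"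
    by (metis (no_types, lifting) abs_mult sum.cong sum_abs)
  also have "\<dots> \<le> (\<Sum>c\<in>{0..<n}. ?K ^ l * \<bar>M $$ (c, b)\<bar>)"
    using Suc.IH Suc.prems by (intro sum_mono mult_right_mono) auto
  also have "\<dots> = ?K ^ l * (\<Sum>c<n. \<bar>M $$ (c, b)\<bar>)" by (simp add: sum_distrib_left atLeast0LessThan)
  also have "\<dots> \<le> ?K ^ l * ?K"
  proof (intro mult_left_mono)
    show "(\<Sum>c<n. \<bar>M $$ (c, b)\<bar>) \<le> ?K"
      using Suc.prems by (intro sum_mono) (auto intro: member_le_sum)
    show "0 \<le> ?K ^ l" by (intro zero_le_power sum_nonneg) auto
  qed
  finally show ?case by (simp add: mult.commute)
qed

lemma mat_exp_entry_diff:
  fixes M :: "real mat"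
  assumes M: "M \<in> carrier_mat n n" and ab: "a < n" "b < n"
  shows "(\<lambda>t. mat_exp t M $$ (a, b)) field_differentiable (at t0)"
proof -
  define K where "K = (\<Sum>a'<n. \<Sum>b'<n. \<bar>M $$ (a', b')\<bar>)"
  define c where "c l = (M ^\<^sub>m l) $$ (a, b) / fact l" for l
  have eq: "(\<lambda>t. mat_exp t M $$ (a, b)) = (\<lambda>t. \<Sum>l. c l * t ^ l)"
    using M ab by (auto simp: mat_exp_entry c_def mult.commute intro!: ext)
  have summ: "summable (\<lambda>l. c l * y ^ l)" for y :: real
  proof (rule summable_comparison_test)
    show "summable (\<lambda>l. inverse (fact l) * (K * \<bar>y\<bar>) ^ l)" by (rule summable_exp)
    have "norm (c l * y ^ l) \<le> inverse (fact l) * (K * \<bar>y\<bar>) ^ l" for l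
    proof -
      have "norm (c l * y ^ l) = \<bar>(M ^\<^sub>m l) $$ (a, b)\<bar> * \<bar>y\<bar> ^ l / fact l"
        by (simp add: c_def abs_mult power_abs)
      also have "\<dots> \<le> K ^ l * \<bar>y\<bar> ^ l / fact l"
        using pow_bound[OF M ab, of l] unfolding K_def
        by (intro divide_right_mono mult_right_mono) auto
      also have "\<dots> = inverse (fact l) * (K * \<bar>y\<bar>) ^ l" by (simp add: power_mult_distrib field_simps)
      finally show ?thesis .
    qed
    then show "\<exists>N. \<forall>l\<ge>N. norm (c l * y ^ l) \<le> inverse (fact l) * (K * \<bar>y\<bar>) ^ l" by blast
  qed
  show ?thesis unfolding eq field_differentiable_def
    using termdiffs_strong_converges_everywhere[OF summ] by blast
qed


lemma fd_prod:
  fixes f :: "'b \<Rightarrow> real \<Rightarrow> real"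
  shows "(\<And>i. i \<in> I \<Longrightarrow> f i field_differentiable (at z0 within S)) \<Longrightarrow> (\<lambda>z. \<Prod>i\<in>I. f i z) field_differentiable (at z0 within S)"
proof (induct I rule: infinite_finite_induct)
  case (infinite A)
  then show ?case by (simp add: field_differentiable_const)
next
  case empty
  then show ?case by (simp add: field_differentiable_const)
next
  case (insert x F')
  then show ?case
    by (simp add: field_differentiable_mult)
qed

lemma det_mat_expand:
  "det (mat j j f) = (\<Sum>p\<in>{p. p permutes {0..<j}}. signof p * (\<Prod>u = 0..<j. f (u, p u)))"
proof -
  have "det (mat j j f) = (\<Sum>p\<in>{p. p permutes {0..<j}}. signof p * (\<Prod>u = 0..<j. mat j j f $$ (u, p u)))"
    by (rule det_def') auto
  also have "\<dots> = (\<Sum>p\<in>{p. p permutes {0..<j}}. signof p * (\<Prod>u = 0..<j. f (u, p u)))"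
  proof (intro sum.cong refl arg_cong2[where f = "(*)"] prod.cong)
    fix p u assume "p \<in> {p. p permutes {0..<j}}" "u \<in> {0..<j}"
    then have "p u < j" using permutes_in_image by fastforce
    then show "mat j j f $$ (u, p u) = f (u, p u)" using \<open>u \<in> _\<close> by auto
  qed
  finally show ?thesis .
qed

lemma mc_exp_diff:
  assumes M: "M \<in> carrier_mat n n" and xy: "x < n choose j" "y < n choose j"
  shows "(\<lambda>t. mult_compound j (mat_exp t M) $$ (x, y)) field_differentiable (at 0)"
proof -
  have dE: "dim_row (mat_exp t M) = n" "dim_col (mat_exp t M) = n" for t
    using mat_exp_carrier[of t M] M by auto
  let ?Tx = "TT j n ! x" and ?Ty = "TT j n ! y"
  have eq: "(\<lambda>t. mult_compound j (mat_exp t M) $$ (x, y)) =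
     (\<lambda>t. \<Sum>p\<in>{p. p permutes {0..<j}}. signof p * (\<Prod>u = 0..<j. mat_exp t M $$ (?Tx ! u, ?Ty ! p u)))"
  proof
    fix t
    show "mult_compound j (mat_exp t M) $$ (x, y) =
     (\<Sum>p\<in>{p. p permutes {0..<j}}. signof p * (\<Prod>u = 0..<j. mat_exp t M $$ (?Tx ! u, ?Ty ! p u)))"
      using xy by (simp add: mc_entry dE det_mat_expand TT_def)
  qed
  have ent: "?Tx ! u < n" "?Ty ! u < n" if "u < j" for u
    using TT_nth[OF xy(1)] TT_nth[OF xy(2)] that by (auto simp: subset_iff)
  show ?thesis unfolding eq
  proof (intro field_differentiable_sum field_differentiable_mult field_differentiable_const fd_prod)
    fix p u assume p: "p \<in> {p. p permutes {0..<j}}" and u: "u \<in> {0..<j}"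
    then have "p u < j" using permutes_in_image by fastforce
    then show "(\<lambda>t. mat_exp t M $$ (?Tx ! u, ?Ty ! p u)) field_differentiable at 0"
      using ent u by (intro mat_exp_entry_diff[OF M]) auto
  qed
qed

lemma mc_one:
  assumes xy: "x < n choose j" "y < n choose j"
  shows "mult_compound j (1\<^sub>m n) $$ (x, y) = (if x = y then 1 else 0)"
proof -
  let ?Tx = "TT j n ! x" and ?Ty = "TT j n ! y"
  have e: "mult_compound j (1\<^sub>m n) $$ (x, y) = det (mat j j (\<lambda>(u, v). 1\<^sub>m n $$ (?Tx ! u, ?Ty ! v)))"
    using xy by (simp add: mc_entry TT_def)
  have tx: "sorted_wrt (<) ?Tx" "length ?Tx = j" "set ?Tx \<subseteq> {..<n}" using TT_nth[OF xy(1)] by auto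
  have ty: "sorted_wrt (<) ?Ty" "length ?Ty = j" "set ?Ty \<subseteq> {..<n}" using TT_nth[OF xy(2)] by auto
  have dx: "distinct ?Tx" "distinct ?Ty" using tx ty by (auto simp: strict_sorted_iff)
  have inx: "?Tx ! u < n" if "u < j" for u using tx that by (auto simp: subset_iff)
  have iny: "?Ty ! u < n" if "u < j" for u using ty that by (auto simp: subset_iff)
  show ?thesis
  proof (cases "x = y")
    case True
    have mj: "mat j j (\<lambda>(u, v). 1\<^sub>m n $$ (?Tx ! u, ?Ty ! v)) = 1\<^sub>m j"
    proof (rule eq_matI)
      fix u v assume "u < dim_row (1\<^sub>m j)" "v < dim_col (1\<^sub>m j)"
      then have uv: "u < j" "v < j" by auto
      then show "mat j j (\<lambda>(u, v). 1\<^sub>m n $$ (?Tx ! u, ?Ty ! v)) $$ (u, v) = 1\<^sub>m j $$ (u, v)"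
        using True inx iny dx tx by (simp add: nth_eq_iff_index_eq)
    qed auto
    have "det (mat j j (\<lambda>(u, v). 1\<^sub>m n $$ (?Tx ! u, ?Ty ! v))) = 1" unfolding mj by (simp add: det_one)
    then show ?thesis using e True by simp
  next
    case False
    have "?Tx \<noteq> ?Ty" using False xy TT_distinct[of j n] TT_length[of j n] by (simp add: nth_eq_iff_index_eq)
    then have "set ?Tx \<noteq> set ?Ty" using tx ty by (metis sorted_distinct_set_unique strict_sorted_iff)
    moreover have "card (set ?Tx) = card (set ?Ty)" using dx tx ty by (simp add: distinct_card)
    ultimately have "\<not> set ?Tx \<subseteq> set ?Ty" by (metis card_subset_eq finite_set)
    then obtain u0 where u0: "u0 < j" "?Tx ! u0 \<notin> set ?Ty" using tx by (auto simp: in_set_conv_nth subset_iff)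
    have "det (mat j j (\<lambda>(u, v). 1\<^sub>m n $$ (?Tx ! u, ?Ty ! v))) = 0"
    proof (rule det_pigeon[of _ j "{u0}" "{}"])
      fix u v assume "u \<in> {u0}" "v < j" "v \<notin> {}"
      moreover have "?Ty ! v \<in> set ?Ty" using \<open>v < j\<close> ty by simp
      ultimately show "mat j j (\<lambda>(u, v). 1\<^sub>m n $$ (?Tx ! u, ?Ty ! v)) $$ (u, v) = 0"
        using u0 inx iny by auto
    qed (use u0 in auto)
    then show ?thesis using e False by simp
  qed
qed


lemma ac_carrier: "M \<in> carrier_mat n n \<Longrightarrow> add_compound j M \<in> carrier_mat (n choose j) (n choose j)"
  unfolding add_compound_def Let_def using mc_carrier[of j M] by auto

lemma ac_entry:
  assumes M: "M \<in> carrier_mat n n" and xy: "x < n choose j" "y < n choose j"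
  shows "add_compound j M $$ (x, y) = deriv (\<lambda>t. mult_compound j (mat_exp t M) $$ (x, y)) 0"
  unfolding add_compound_def Let_def using mc_carrier[of j M] M xy by auto

lemma kron_deriv:
  assumes A: "A \<in> carrier_mat n n" and B: "B \<in> carrier_mat m m"
    and xy: "x < (n choose s) * (m choose i)" "y < (n choose s) * (m choose i)"
  shows "deriv (\<lambda>t. kron (mult_compound s (mat_exp t A)) (mult_compound i (mat_exp t B)) $$ (x, y)) 0
    = kron_sum (add_compound s A) (add_compound i B) $$ (x, y)"
proof -
  let ?b = "m choose i"
  have bpos: "0 < ?b" using xy by (cases ?b) auto
  have xd: "x div ?b < n choose s" "y div ?b < n choose s"
    using xy by (auto simp: less_mult_imp_div_less)
  have xm: "x mod ?b < ?b" "y mod ?b < ?b" using bpos by auto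
  have cA: "mult_compound s (mat_exp t A) \<in> carrier_mat (n choose s) (n choose s)" for t
    using mc_carrier[of s "mat_exp t A"] mat_exp_carrier[of t A] A by auto
  have cB: "mult_compound i (mat_exp t B) \<in> carrier_mat ?b ?b" for t
    using mc_carrier[of i "mat_exp t B"] mat_exp_carrier[of t B] B by auto
  define f where "f t = mult_compound s (mat_exp t A) $$ (x div ?b, y div ?b)" for t
  define g where "g t = mult_compound i (mat_exp t B) $$ (x mod ?b, y mod ?b)" for t
  have eq: "(\<lambda>t. kron (mult_compound s (mat_exp t A)) (mult_compound i (mat_exp t B)) $$ (x, y)) = (\<lambda>t. f t * g t)"
    using kron_entry[OF cA cB xy] f_def g_def by auto
  have fd: "f field_differentiable at 0" unfolding f_def by (rule mc_exp_diff[OF A xd])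
  have gd: "g field_differentiable at 0" unfolding g_def by (rule mc_exp_diff[OF B xm])
  have f0: "f 0 = (if x div ?b = y div ?b then 1 else 0)"
    unfolding f_def mat_exp_zero[OF A] by (rule mc_one[OF xd])
  have g0: "g 0 = (if x mod ?b = y mod ?b then 1 else 0)"
    unfolding g_def mat_exp_zero[OF B] by (rule mc_one[OF xm])
  have df: "deriv f 0 = add_compound s A $$ (x div ?b, y div ?b)"
    unfolding f_def by (rule ac_entry[OF A xd, symmetric])
  have dg: "deriv g 0 = add_compound i B $$ (x mod ?b, y mod ?b)"
    unfolding g_def by (rule ac_entry[OF B xm, symmetric])
  have "deriv (\<lambda>t. f t * g t) 0 = f 0 * deriv g 0 + deriv f 0 * g 0"
    by (rule deriv_mult[OF fd gd])
  also have "\<dots> = kron_sum (add_compound s A) (add_compound i B) $$ (x, y)"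
    using kron_sum_entry[OF ac_carrier[OF A] ac_carrier[OF B] xy] f0 g0 df dg by simp
  finally show ?thesis unfolding eq .
qed

context
  fixes n m k :: nat
  assumes kle: "k \<le> n + m"
begin

lemma diag_carrier:
  assumes F: "\<And>i. i \<in> set (idxs n m k) \<Longrightarrow> F i \<in> carrier_mat (hh n m k i) (hh n m k i)"
  shows "diag_block_mat (map F (idxs n m k)) \<in> carrier_mat ((n + m) choose k) ((n + m) choose k)"
proof -
  have e1: "map dim_row (map F (idxs n m k)) = map length (map (blockL n m k) (idxs n m k))"
    and e2: "map dim_col (map F (idxs n m k)) = map length (map (blockL n m k) (idxs n m k))"
    using F by (auto simp: blockL_length)
  have e3: "sum_list (map length (map (blockL n m k) (idxs n m k))) = (n + m) choose k"
    using LD_length[OF kle] unfolding LD_def by (simp add: length_concat)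
  have "dim_row (diag_block_mat (map F (idxs n m k))) = (n + m) choose k"
    by (simp only: dim_diag_block_mat e1 e3)
  moreover have "dim_col (diag_block_mat (map F (idxs n m k))) = (n + m) choose k"
    by (simp only: dim_diag_block_mat e2 e3)
  ultimately show ?thesis unfolding carrier_mat_def by simp
qed

lemma F_mult_carrier:
  assumes A': "A' \<in> carrier_mat n n" and B': "B' \<in> carrier_mat m m"
  shows "kron (mult_compound (k - i) A') (mult_compound i B') \<in> carrier_mat (hh n m k i) (hh n m k i)"
  unfolding hh_def using mc_carrier[of "k - i" A'] mc_carrier[of i B'] A' B'
  by (intro kron_carrier) auto

lemma F_add_carrier:
  assumes A': "A' \<in> carrier_mat n n" and B': "B' \<in> carrier_mat m m"
  shows "kron_sum (add_compound (k - i) A') (add_compound i B') \<in> carrier_mat (hh n m k i) (hh n m k i)"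
  unfolding hh_def using ac_carrier[OF A', of "k - i"] ac_carrier[OF B', of i]
  by (intro kron_sum_carrier) auto

lemma mult_main:
  assumes A': "A' \<in> carrier_mat n n" and B': "B' \<in> carrier_mat m m"
    and pq: "p < (n + m) choose k" "q < (n + m) choose k"
  shows "mult_compound k (four_block_mat A' (0\<^sub>m n m) (0\<^sub>m m n) B') $$ (sig n m k p, sig n m k q) =
    diag_block_mat (map (\<lambda>i. kron (mult_compound (k - i) A') (mult_compound i B')) (idxs n m k)) $$ (p, q)"
proof -
  obtain b x where bx: "b < length (idxs n m k)" "x < hh n m k (idxs n m k ! b)" "p = off n m k b + x"
    using decomp[OF kle pq(1)] by blast
  obtain b' y where byq: "b' < length (idxs n m k)" "y < hh n m k (idxs n m k ! b')" "q = off n m k b' + y"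
    using decomp[OF kle pq(2)] by blast
  show ?thesis unfolding bx(3) byq(3)
    using mult_block_entry[OF kle A' B' bx(1) byq(1) bx(2) byq(2)]
      diag_struct[OF kle _ bx(1) byq(1) bx(2) byq(2), of "\<lambda>i. kron (mult_compound (k - i) A') (mult_compound i B')"]
      F_mult_carrier[OF A' B'] by simp
qed

lemma add_main:
  assumes A: "A \<in> carrier_mat n n" and B: "B \<in> carrier_mat m m"
    and pq: "p < (n + m) choose k" "q < (n + m) choose k"
  shows "add_compound k (four_block_mat A (0\<^sub>m n m) (0\<^sub>m m n) B) $$ (sig n m k p, sig n m k q) =
    diag_block_mat (map (\<lambda>i. kron_sum (add_compound (k - i) A) (add_compound i B)) (idxs n m k)) $$ (p, q)"
proof -
  let ?C = "four_block_mat A (0\<^sub>m n m) (0\<^sub>m m n) B"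
  have C: "?C \<in> carrier_mat (n + m) (n + m)" using A B by auto
  obtain b x where bx: "b < length (idxs n m k)" "x < hh n m k (idxs n m k ! b)" "p = off n m k b + x"
    using decomp[OF kle pq(1)] by blast
  obtain b' y where byq: "b' < length (idxs n m k)" "y < hh n m k (idxs n m k ! b')" "q = off n m k b' + y"
    using decomp[OF kle pq(2)] by blast
  have sp: "sig n m k p < (n + m) choose k" "sig n m k q < (n + m) choose k" using sig_nth[OF kle] pq by auto
  have "add_compound k ?C $$ (sig n m k p, sig n m k q) =
     deriv (\<lambda>t. mult_compound k (mat_exp t ?C) $$ (sig n m k p, sig n m k q)) 0"
    by (rule ac_entry[OF C sp])
  also have "(\<lambda>t. mult_compound k (mat_exp t ?C) $$ (sig n m k p, sig n m k q)) =
     (\<lambda>t. if b = b' then kron (mult_compound (k - idxs n m k ! b) (mat_exp t A))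
        (mult_compound (idxs n m k ! b) (mat_exp t B)) $$ (x, y) else 0)"
  proof
    fix t
    have cA: "mat_exp t A \<in> carrier_mat n n" and cB: "mat_exp t B \<in> carrier_mat m m"
      using mat_exp_carrier[of t A] mat_exp_carrier[of t B] A B by auto
    show "mult_compound k (mat_exp t ?C) $$ (sig n m k p, sig n m k q) =
     (if b = b' then kron (mult_compound (k - idxs n m k ! b) (mat_exp t A))
        (mult_compound (idxs n m k ! b) (mat_exp t B)) $$ (x, y) else 0)"
      unfolding mat_exp_four_block[OF A B] bx(3) byq(3)
      by (rule mult_block_entry[OF kle cA cB bx(1) byq(1) bx(2) byq(2)])
  qed
  also have "deriv (\<lambda>t. if b = b' then kron (mult_compound (k - idxs n m k ! b) (mat_exp t A))
        (mult_compound (idxs n m k ! b) (mat_exp t B)) $$ (x, y) else 0) 0 =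
     (if b = b' then kron_sum (add_compound (k - idxs n m k ! b) A) (add_compound (idxs n m k ! b) B) $$ (x, y) else 0)"
  proof (cases "b = b'")
    case True
    then show ?thesis using kron_deriv[OF A B, of x "k - idxs n m k ! b" "idxs n m k ! b" y] bx byq(2)
      by (simp add: hh_def)
  next
    case False
    then show ?thesis by simp
  qed
  also have "\<dots> = diag_block_mat (map (\<lambda>i. kron_sum (add_compound (k - i) A) (add_compound i B)) (idxs n m k)) $$ (p, q)"
    unfolding bx(3) byq(3)
    using diag_struct[OF kle _ bx(1) byq(1) bx(2) byq(2), of "\<lambda>i. kron_sum (add_compound (k - i) A) (add_compound i B)"]
      F_add_carrier[OF A B] by simp
  finally show ?thesis .
qed

end


theorem theorem3:
  fixes A B :: "real mat" and n m k :: nat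
  assumes "A \<in> carrier_mat n n" and "B \<in> carrier_mat m m"
    and "1 \<le> k" and "k \<le> n + m"
  shows "let C = four_block_mat A (0\<^sub>m n m) (0\<^sub>m m n) B;
             r = (n + m) choose k;
             i1 = max 0 (int k - int n); i2 = min (int m) (int k);
             idx = map nat [i1..i2]
         in \<exists>P Pinv. perm_mat r P \<and> Pinv \<in> carrier_mat r r \<and>
              P * Pinv = 1\<^sub>m r \<and> Pinv * P = 1\<^sub>m r \<and>
              mult_compound k C =
                P * diag_block_mat (map (\<lambda>i. kron (mult_compound (k - i) A) (mult_compound i B)) idx) * Pinv \<and>
              add_compound k C =
                P * diag_block_mat (map (\<lambda>i. kron_sum (add_compound (k - i) A) (add_compound i B)) idx) * Pinv"
proof -
  note A = assms(1) and B = assms(2) and kle = assms(4)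
  let ?C = "four_block_mat A (0\<^sub>m n m) (0\<^sub>m m n) B"
  let ?r = "(n + m) choose k"
  let ?s = "sig n m k"
  have idx: "map nat [max 0 (int k - int n)..min (int m) (int k)] = idxs n m k" by (simp add: idxs_def)
  have sp: "?s permutes {..<?r}" by (rule sig_permutes[OF kle])
  have C: "?C \<in> carrier_mat (n + m) (n + m)" using A B by auto
  have MC: "mult_compound k ?C \<in> carrier_mat ?r ?r" using mc_carrier[of k ?C] A B by auto
  have AC: "add_compound k ?C \<in> carrier_mat ?r ?r" by (rule ac_carrier[OF C])
  have D1: "diag_block_mat (map (\<lambda>i. kron (mult_compound (k - i) A) (mult_compound i B)) (idxs n m k)) \<in> carrier_mat ?r ?r"
    by (rule diag_carrier[OF kle]) (rule F_mult_carrier[OF kle A B])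
  have D2: "diag_block_mat (map (\<lambda>i. kron_sum (add_compound (k - i) A) (add_compound i B)) (idxs n m k)) \<in> carrier_mat ?r ?r"
    by (rule diag_carrier[OF kle]) (rule F_add_carrier[OF kle A B])
  have e1: "mult_compound k ?C = Pm ?r ?s * diag_block_mat (map (\<lambda>i. kron (mult_compound (k - i) A) (mult_compound i B)) (idxs n m k)) * Pi ?r ?s"
    by (rule conj_eq[OF sp D1 MC]) (rule mult_main[OF kle A B])
  have e2: "add_compound k ?C = Pm ?r ?s * diag_block_mat (map (\<lambda>i. kron_sum (add_compound (k - i) A) (add_compound i B)) (idxs n m k)) * Pi ?r ?s"
    by (rule conj_eq[OF sp D2 AC]) (rule add_main[OF kle A B])
  show ?thesis unfolding Let_def idx
    using perm_mat_Pm[OF sp] Pi_carrier[OF sp] Pm_Pi[OF sp] Pi_Pm[OF sp] e1 e2 by blast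
qed

end
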